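(* Let $\Pi$ be a min-FGPP with $\alpha_2\ge\frac{\alpha_1}{2}>0$. Let $(G=(V,E),k,p)$ be an instance of $\Pi$, let $x=\max\{\frac{p}{\alpha_2},\min\{\frac{p}{\alpha_1},\frac{p}{\alpha_2}+(1-\frac{\alpha_1}{\alpha_2})k\}\}$, write $E=\{e_1,\dots,e_{|E|}\}$, and let $\mathcal{F}$ be an $(|E|,x)$-universal set. For each $f\in\mathcal{F}$ let $G_f$ be a copy of $G$ in which the copy of $e_i$ is colored red if $f(i)=0$ and blue if $f(i)=1$. Then $(G,k,p)$ is a yes-instance of $\Pi$ if and only if at least one of the instances $(G_f,k,p)$, $f\in\mathcal{F}$, is a yes-instance of EC-$\Pi$.
   Context: Graphs are finite, simple and undirected. For $X\subseteq V$, $E(X)$ is the set of edges with both endpoints in $X$, $E(X,V\setminus X)$ the set of edges with exactly one endpoint in $X$, and $\mathrm{val}(X)=\alpha_1|E(X)|+\alpha_2|E(X,V\setminus X)|$. The min-FGPP $\Pi$: given $G=(V,E)$, $k\in\mathbb{N}$, $p\in\mathbb{R}$, decide whether some $X\subseteq V$ with $|X|=k$ has $\mathrm{val}(X)\le p$. For a graph whose edges are each colored red or blue and $X\subseteq V$, let $\mathrm{C}(X)$ be the family of node-sets of maximal connected components of the graph $(X,E_r)$, where $E_r$ is the set of red edges with both endpoints in $X$, and let $\mathrm{val}^*(X)=\sum_{C\in\mathrm{C}(X)}\mathrm{val}(C)$ (with $\mathrm{val}$ computed in the whole graph, ignoring colors). EC-$\Pi$: given such an edge-colored graph, $k\in\mathbb{N}$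 and $p\in\mathbb{R}$, decide whether there is $X\subseteq V$ with $|X|=k$ such that all edges of $E(X,V\setminus X)$ are blue and $\mathrm{val}^*(X)\le p$. For real $t\ge0$, a set $\mathcal{F}$ of functions $\{1,\dots,n\}\to\{0,1\}$ is an $(n,t)$-universal set if for every $I\subseteq\{1,\dots,n\}$ with $|I|\le t$ and every $f':I\to\{0,1\}$ there is $f\in\mathcal{F}$ with $f(i)=f'(i)$ for all $i\in I$. *)

theory Defs
  imports Complex_Main
begin

definition simple_graph :: "'a set \<Rightarrow> 'a set set \<Rightarrow> bool" where
  "simple_graph V E \<longleftrightarrow> finite V \<and>
     (\<forall>e\<in>E. \<exists>u v. e = {u, v} \<and> u \<noteq> v \<and> u \<in> V \<and> v \<in> V)"

definition inner_edges :: "'a set set \<Rightarrow> 'a set \<Rightarrow> 'a set set" where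
  "inner_edges E X = {e \<in> E. e \<subseteq> X}"

definition cut_edges :: "'a set set \<Rightarrow> 'a set \<Rightarrow> 'a set set" where
  "cut_edges E X = {e \<in> E. card (e \<inter> X) = 1}"

definition val :: "real \<Rightarrow> real \<Rightarrow> 'a set set \<Rightarrow> 'a set \<Rightarrow> real" where
  "val a1 a2 E X = a1 * real (card (inner_edges E X)) + a2 * real (card (cut_edges E X))"

definition fgpp_yes :: "real \<Rightarrow> real \<Rightarrow> 'a set \<Rightarrow> 'a set set \<Rightarrow> nat \<Rightarrow> real \<Rightarrow> bool" where
  "fgpp_yes a1 a2 V E k p \<longleftrightarrow> (\<exists>X. X \<subseteq> V \<and> card X = k \<and> val a1 a2 E X \<le> p)"

text \<open>Edge-colored graphs: R \<subseteq> E is the set of red edges, E - R the blue ones.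
  Adjacency in the graph (X, red edges with both endpoints in X).\<close>
definition red_adj :: "'a set set \<Rightarrow> 'a set \<Rightarrow> 'a \<Rightarrow> 'a \<Rightarrow> bool" where
  "red_adj R X u v \<longleftrightarrow> u \<in> X \<and> v \<in> X \<and> {u, v} \<in> R"

definition red_components :: "'a set set \<Rightarrow> 'a set \<Rightarrow> 'a set set" where
  "red_components R X = {{v \<in> X. (red_adj R X)\<^sup>*\<^sup>* u v} | u. u \<in> X}"

definition val_star :: "real \<Rightarrow> real \<Rightarrow> 'a set set \<Rightarrow> 'a set set \<Rightarrow> 'a set \<Rightarrow> real" where
  "val_star a1 a2 E R X = (\<Sum>C\<in>red_components R X. val a1 a2 E C)"

definition ec_yes :: "real \<Rightarrow> real \<Rightarrow> 'a set \<Rightarrow> 'a set set \<Rightarrow> 'a set set \<Rightarrow> nat \<Rightarrow> real \<Rightarrow> bool" where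
  "ec_yes a1 a2 V E R k p \<longleftrightarrow> (\<exists>X. X \<subseteq> V \<and> card X = k \<and>
      (\<forall>e\<in>cut_edges E X. e \<notin> R) \<and> val_star a1 a2 E R X \<le> p)"

definition universal_set :: "(nat \<Rightarrow> nat) set \<Rightarrow> nat \<Rightarrow> real \<Rightarrow> bool" where
  "universal_set F n t \<longleftrightarrow> (\<forall>f\<in>F. \<forall>i\<in>{1..n}. f i \<in> {0, 1}) \<and>
     (\<forall>I f'. I \<subseteq> {1..n} \<and> real (card I) \<le> t \<and> (\<forall>i\<in>I. f' i \<in> {0::nat, 1}) \<longrightarrow>
        (\<exists>f\<in>F. \<forall>i\<in>I. f i = f' i))"

definition red_edges_of :: "(nat \<Rightarrow> 'a set) \<Rightarrow> nat \<Rightarrow> (nat \<Rightarrow> nat) \<Rightarrow> 'a set set" where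
  "red_edges_of enum m f = {enum i | i. i \<in> {1..m} \<and> f i = 0}"

end

theory Submission
  imports Defs
begin

lemma red_adj_sym: "red_adj R X u v \<Longrightarrow> red_adj R X v u"
  by (auto simp: red_adj_def insert_commute)

lemma conn_sym: "(red_adj R X)\<^sup>*\<^sup>* u v \<Longrightarrow> (red_adj R X)\<^sup>*\<^sup>* v u"
proof (induction rule: rtranclp.induct)
  case (rtrancl_refl a) then show ?case by simp
next
  case (rtrancl_into_rtrancl a b c)
  then show ?case by (meson converse_rtranclp_into_rtranclp red_adj_sym)
qed

lemma conn_mem: "(red_adj R X)\<^sup>*\<^sup>* u v \<Longrightarrow> u \<noteq> v \<Longrightarrow> u \<in> X \<and> v \<in> X"
proof -
  assume h: "(red_adj R X)\<^sup>*\<^sup>* u v" "u \<noteq> v"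
  then have t: "(red_adj R X)\<^sup>+\<^sup>+ u v" by (meson rtranclpD)
  from t obtain z where "red_adj R X u z" by (auto dest: tranclpD)
  moreover from t obtain y where "red_adj R X y v" by (cases rule: tranclp.cases) auto
  ultimately show ?thesis by (simp add: red_adj_def)
qed

definition rcc :: "'a set set \<Rightarrow> 'a set \<Rightarrow> 'a \<Rightarrow> 'a set" where
  "rcc R X u = {v \<in> X. (red_adj R X)\<^sup>*\<^sup>* u v}"

lemma red_components_eq: "red_components R X = rcc R X ` X"
  unfolding red_components_def rcc_def by (simp add: Setcompr_eq_image)

lemma rcc_self: "u \<in> X \<Longrightarrow> u \<in> rcc R X u"
  by (simp add: rcc_def)

lemma rcc_sub: "rcc R X u \<subseteq> X"
  by (auto simp: rcc_def)

lemma rcc_eq: assumes "x \<in> rcc R X u" shows "rcc R X x = rcc R X u"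
proof -
  have h: "(red_adj R X)\<^sup>*\<^sup>* u x" using assms by (simp add: rcc_def)
  have "(red_adj R X)\<^sup>*\<^sup>* x v \<longleftrightarrow> (red_adj R X)\<^sup>*\<^sup>* u v" for v
    using rtranclp_trans[OF h, of v] rtranclp_trans[OF conn_sym[OF h], of v] by blast
  then show ?thesis by (simp add: rcc_def)
qed

definition gval :: "real \<Rightarrow> real \<Rightarrow> 'a set \<Rightarrow> 'a set \<Rightarrow> real" where
  "gval a1 a2 Y e = a1 * (if e \<subseteq> Y then 1 else 0) + a2 * (if card (e \<inter> Y) = 1 then 1 else 0)"

lemma card_filter_sum: "finite A \<Longrightarrow> real (card {x\<in>A. P x}) = (\<Sum>x\<in>A. if P x then 1 else 0)"
  unfolding real_of_card by (rule sum.inter_filter)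

lemma val_sum: "finite E \<Longrightarrow> val a1 a2 E Y = (\<Sum>e\<in>E. gval a1 a2 Y e)"
proof -
  assume f: "finite E"
  have "a1 * real (card {e \<in> E. e \<subseteq> Y}) = (\<Sum>e\<in>E. a1 * (if e \<subseteq> Y then 1 else 0))"
    by (simp add: card_filter_sum[OF f] sum_distrib_left)
  moreover have "a2 * real (card {e \<in> E. card (e \<inter> Y) = 1}) = (\<Sum>e\<in>E. a2 * (if card (e \<inter> Y) = 1 then 1 else 0))"
    by (simp only: card_filter_sum[OF f] sum_distrib_left)
  ultimately show ?thesis unfolding val_def gval_def inner_edges_def cut_edges_def
    by (simp only: sum.distrib)
qed

lemma val_star_sum: "finite E \<Longrightarrow>
   val_star a1 a2 E R X = (\<Sum>e\<in>E. \<Sum>C\<in>red_components R X. gval a1 a2 C e)"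
  unfolding val_star_def by (simp add: val_sum sum.swap[of _ _ E])

lemma edge_sum:
  assumes fin: "finite X" and uv: "u \<noteq> v"
  shows "(\<Sum>C\<in>red_components R X. gval a1 a2 C {u,v}) =
     (if u \<in> X \<and> v \<in> X \<and> \<not> (red_adj R X)\<^sup>*\<^sup>* u v then 2*a2 else gval a1 a2 X {u,v})"
proof -
  let ?P = "red_components R X"
  let ?T = "{C\<in>?P. u\<in>C \<or> v\<in>C}"
  have finP: "finite ?P" using fin by (simp add: red_components_eq)
  have s1: "(\<Sum>C\<in>?P. gval a1 a2 C {u,v}) = (\<Sum>C\<in>?T. gval a1 a2 C {u,v})"
    by (rule sum.mono_neutral_right[OF finP]) (auto simp: gval_def)
  have memP: "C \<in> ?P \<Longrightarrow> x \<in> C \<Longrightarrow> C = rcc R X x" for C x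
    by (auto simp: red_components_eq rcc_eq)
  have subX: "C \<in> ?P \<Longrightarrow> C \<subseteq> X" for C
    by (auto simp: red_components_eq rcc_def)
  have inP: "x \<in> X \<Longrightarrow> rcc R X x \<in> ?P" for x
    by (simp add: red_components_eq)
  show ?thesis
  proof (cases "u \<in> X")
    case uX: True
    show ?thesis
    proof (cases "v \<in> X")
      case vX: True
      show ?thesis
      proof (cases "(red_adj R X)\<^sup>*\<^sup>* u v")
        case True
        then have vin: "v \<in> rcc R X u" using vX by (simp add: rcc_def)
        have T: "?T = {rcc R X u}"
          using memP inP uX vin rcc_self rcc_eq[OF vin] by blast
        have "{u,v} \<subseteq> rcc R X u" using vin rcc_self[OF uX] by auto
        moreover have "card ({u, v} \<inter> rcc R X u) = 2" using vin rcc_self[OF uX] uv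
          by (simp add: Int_absorb2 calculation)
        ultimately show ?thesis using s1 T True uX vX uv by (simp add: gval_def)
      next
        case False
        have vn: "v \<notin> rcc R X u" using False by (simp add: rcc_def)
        have un: "u \<notin> rcc R X v" using False conn_sym by (fastforce simp: rcc_def)
        have ne: "rcc R X u \<noteq> rcc R X v" using vn rcc_self[OF vX] by auto
        have T: "?T = {rcc R X u, rcc R X v}"
        proof
          show "?T \<subseteq> {rcc R X u, rcc R X v}"
          proof
            fix C assume C: "C \<in> ?T"
            then have "C \<in> ?P" "u \<in> C \<or> v \<in> C" by auto
            then show "C \<in> {rcc R X u, rcc R X v}" using memP[of C u] memP[of C v] subX[of C] uX vX by auto
          qed
          show "{rcc R X u, rcc R X v} \<subseteq> ?T" using inP[OF uX] inP[OF vX] rcc_self[OF uX] rcc_self[OF vX] by auto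
        qed
        have i1: "{u,v} \<inter> rcc R X u = {u}" using vn rcc_self[OF uX] by auto
        have i2: "{u,v} \<inter> rcc R X v = {v}" using un rcc_self[OF vX] by auto
        have g1: "gval a1 a2 (rcc R X u) {u,v} = a2" using vn i1 by (simp add: gval_def)
        have g2: "gval a1 a2 (rcc R X v) {u,v} = a2" using un i2 by (simp add: gval_def)
        show ?thesis using s1 T ne g1 g2 False uX vX by simp
      qed
    next
      case vX: False
      have vn: "v \<notin> rcc R X u" using vX by (simp add: rcc_def)
      have T: "?T = {rcc R X u}"
      proof
        show "?T \<subseteq> {rcc R X u}"
          proof
            fix C assume C: "C \<in> ?T"
            then have "C \<in> ?P" "u \<in> C \<or> v \<in> C" by auto
            then show "C \<in> {rcc R X u}" using memP[of C u] memP[of C v] subX[of C] uX vX by auto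
          qed
        show "{rcc R X u} \<subseteq> ?T" using inP[OF uX] rcc_self[OF uX] by auto
      qed
      have i1: "{u,v} \<inter> rcc R X u = {u}" using vn rcc_self[OF uX] by auto
      have i2: "{u,v} \<inter> X = {u}" using vX uX by auto
      show ?thesis using s1 T vn i1 i2 vX by (simp add: gval_def)
    qed
  next
    case uX: False
    show ?thesis
    proof (cases "v \<in> X")
      case vX: True
      have un: "u \<notin> rcc R X v" using uX by (simp add: rcc_def)
      have T: "?T = {rcc R X v}"
      proof
        show "?T \<subseteq> {rcc R X v}"
          proof
            fix C assume C: "C \<in> ?T"
            then have "C \<in> ?P" "u \<in> C \<or> v \<in> C" by auto
            then show "C \<in> {rcc R X v}" using memP[of C u] memP[of C v] subX[of C] uX vX by auto
          qed
        show "{rcc R X v} \<subseteq> ?T" using inP[OF vX] rcc_self[OF vX] by auto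
      qed
      have i1: "{u,v} \<inter> rcc R X v = {v}" using un rcc_self[OF vX] by auto
      have i2: "{u,v} \<inter> X = {v}" using vX uX by auto
      show ?thesis using s1 T un i1 i2 uX by (simp add: gval_def)
    next
      case vX: False
      have T: "?T = {}" using subX uX vX by auto
      have i2: "{u,v} \<inter> X = {}" using vX uX by auto
      show ?thesis using s1 T i2 uX by (simp add: gval_def)
    qed
  qed
qed

lemma simple_graph_finE: "simple_graph V E \<Longrightarrow> finite E"
proof -
  assume h: "simple_graph V E"
  then have "E \<subseteq> Pow V" by (force simp: simple_graph_def)
  moreover have "finite V" using h by (simp add: simple_graph_def)
  ultimately show ?thesis by (meson finite_Pow_iff finite_subset)
qed

lemma val_le_star:
  assumes "a1 \<le> 2*a2" "simple_graph V E" "X \<subseteq> V"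
  shows "val a1 a2 E X \<le> val_star a1 a2 E R X"
proof -
  have fE: "finite E" using assms simple_graph_finE by blast
  have fX: "finite X" using assms by (meson finite_subset simple_graph_def)
  have "(\<Sum>e\<in>E. gval a1 a2 X e) \<le> (\<Sum>e\<in>E. \<Sum>C\<in>red_components R X. gval a1 a2 C e)"
  proof (rule sum_mono)
    fix e assume "e \<in> E"
    then obtain u v where e: "e = {u,v}" "u \<noteq> v" using assms(2) by (auto simp: simple_graph_def)
    have c2: "card {u,v} = 2" using e by simp
    show "gval a1 a2 X e \<le> (\<Sum>C\<in>red_components R X. gval a1 a2 C e)"
    proof (cases "u \<in> X \<and> v \<in> X \<and> \<not> (red_adj R X)\<^sup>*\<^sup>* u v")
      case True
      then have "{u,v} \<inter> X = {u,v}" "{u,v} \<subseteq> X" by auto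
      then have "gval a1 a2 X e = a1" using c2 e(1) by (simp add: gval_def)
      moreover have "(\<Sum>C\<in>red_components R X. gval a1 a2 C {u,v}) = 2*a2" using edge_sum[OF fX e(2), of a1 a2 R] by (simp only: if_P[OF True])
      ultimately show ?thesis using e(1) assms(1) by simp
    next
      case False
      have "(\<Sum>C\<in>red_components R X. gval a1 a2 C {u,v}) = gval a1 a2 X {u,v}" using edge_sum[OF fX e(2), of a1 a2 R] by (simp only: if_not_P[OF False])
      then show ?thesis using e(1) by simp
    qed
  qed
  then show ?thesis using fE by (simp add: val_sum val_star_sum)
qed

lemma star_le_val:
  assumes "simple_graph V E" "X \<subseteq> V"
    and conn: "\<And>u v. {u,v} \<in> E \<Longrightarrow> u \<in> X \<Longrightarrow> v \<in> X \<Longrightarrow> (red_adj R X)\<^sup>*\<^sup>* u v"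
  shows "val_star a1 a2 E R X \<le> val a1 a2 E X"
proof -
  have fE: "finite E" using assms simple_graph_finE by blast
  have fX: "finite X" using assms by (meson finite_subset simple_graph_def)
  have "(\<Sum>e\<in>E. \<Sum>C\<in>red_components R X. gval a1 a2 C e) \<le> (\<Sum>e\<in>E. gval a1 a2 X e)"
  proof (rule sum_mono)
    fix e assume eE: "e \<in> E"
    then obtain u v where e: "e = {u,v}" "u \<noteq> v" using assms(1) by (auto simp: simple_graph_def)
    show "(\<Sum>C\<in>red_components R X. gval a1 a2 C e) \<le> gval a1 a2 X e"
    proof -
      have "u \<in> X \<and> v \<in> X \<longrightarrow> (red_adj R X)\<^sup>*\<^sup>* u v" using conn eE e(1) by blast
      then have nc: "\<not> (u \<in> X \<and> v \<in> X \<and> \<not> (red_adj R X)\<^sup>*\<^sup>* u v)" by blast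
      have "(\<Sum>C\<in>red_components R X. gval a1 a2 C {u,v}) = gval a1 a2 X {u,v}" using edge_sum[OF fX e(2), of a1 a2 R] by (simp only: if_not_P[OF nc])
      then show ?thesis using e(1) by simp
    qed
  qed
  then show ?thesis using fE by (simp add: val_sum val_star_sum)
qed

lemma spanning:
  assumes fin: "finite X"
  shows "\<exists>S \<subseteq> A. card S \<le> card X \<and> (\<forall>u v. (red_adj A X)\<^sup>*\<^sup>* u v \<longrightarrow> (red_adj S X)\<^sup>*\<^sup>* u v)"
proof -
  let ?r = "red_adj A X"
  define root where "root w = (SOME z. ?r\<^sup>*\<^sup>* z w)" for w
  have root1: "?r\<^sup>*\<^sup>* (root w) w" for w unfolding root_def by (rule someI[of _ w]) simp
  have root_eq: "root w = root w'" if h: "?r\<^sup>*\<^sup>* w w'" for w w'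
  proof -
    have "(\<lambda>z. ?r\<^sup>*\<^sup>* z w) = (\<lambda>z. ?r\<^sup>*\<^sup>* z w')"
    proof (rule ext, rule iffI)
      fix z
      show "?r\<^sup>*\<^sup>* z w'" if "?r\<^sup>*\<^sup>* z w" using that h by (rule rtranclp_trans)
      show "?r\<^sup>*\<^sup>* z w" if "?r\<^sup>*\<^sup>* z w'" using that conn_sym[OF h] by (rule rtranclp_trans)
    qed
    then show ?thesis unfolding root_def by simp
  qed
  define d where "d w = (LEAST n. (?r^^n) (root w) w)" for w
  have d1: "(?r^^(d w)) (root w) w" for w
  proof -
    have "\<exists>n. (?r^^n) (root w) w" using root1[of w] unfolding rtranclp_power .
    then show ?thesis unfolding d_def by (rule LeastI_ex)
  qed
  have par_ex: "\<exists>w'. ?r w' w \<and> d w' < d w" if "d w > 0" for w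
  proof -
    from that obtain n where n: "d w = Suc n" by (auto simp: gr0_conv_Suc)
    have "(?r^^Suc n) (root w) w" using d1[of w] unfolding n .
    then obtain w' where w1: "(?r^^n) (root w) w'" and w2: "?r w' w"
      by (rule relpowp_Suc_E)
    have "root w' = root w" using w2 root_eq by blast
    then have "d w' \<le> n" unfolding d_def by (intro Least_le) (simp add: w1)
    then show ?thesis using w2 n by auto
  qed
  define par where "par w = (SOME w'. ?r w' w \<and> d w' < d w)" for w
  have par: "?r (par w) w \<and> d (par w) < d w" if "d w > 0" for w
    unfolding par_def using par_ex[OF that] by (rule someI_ex)
  define S where "S = (\<lambda>w. {par w, w}) ` {w\<in>X. d w > 0}"
  have SA: "S \<subseteq> A" using par by (auto simp: S_def red_adj_def)
  have "card S \<le> card {w\<in>X. d w > 0}" unfolding S_def by (rule card_image_le) (simp add: fin)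
  also have "\<dots> \<le> card X" by (rule card_mono[OF fin]) auto
  finally have cardS: "card S \<le> card X" .
  have reach: "(red_adj S X)\<^sup>*\<^sup>* (root w) w" if "w \<in> X" for w
    using that
  proof (induction "d w" arbitrary: w rule: less_induct)
    case less
    show ?case
    proof (cases "d w = 0")
      case True
      then have "root w = w" using d1[of w] by simp
      then show ?thesis by simp
    next
      case False
      then have p: "?r (par w) w" "d (par w) < d w" using par by auto
      then have pX: "par w \<in> X" by (simp add: red_adj_def)
      have IH: "(red_adj S X)\<^sup>*\<^sup>* (root (par w)) (par w)" using less.hyps[OF p(2) pX] .
      have "root (par w) = root w" using root_eq p(1) by blast
      then have IH2: "(red_adj S X)\<^sup>*\<^sup>* (root w) (par w)" using IH by simp
      have "{par w, w} \<in> S" using False less.prems by (auto simp: S_def)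
      then have "red_adj S X (par w) w" using less.prems pX by (simp add: red_adj_def)
      with IH2 show ?thesis by (rule rtranclp.rtrancl_into_rtrancl)
    qed
  qed
  show ?thesis
  proof (intro exI conjI allI impI)
    show "S \<subseteq> A" by (rule SA)
    show "card S \<le> card X" by (rule cardS)
    fix u v assume h: "?r\<^sup>*\<^sup>* u v"
    show "(red_adj S X)\<^sup>*\<^sup>* u v"
    proof (cases "u = v")
      case False
      have uv: "u \<in> X" "v \<in> X" using conn_mem[OF h False] by simp_all
      have ru: "root u = root v" using root_eq h by blast
      have a: "(red_adj S X)\<^sup>*\<^sup>* u (root u)" using conn_sym[OF reach[OF uv(1)]] .
      have b: "(red_adj S X)\<^sup>*\<^sup>* (root u) v" using reach[OF uv(2)] ru by simp
      show ?thesis using a b by (rule rtranclp_trans)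
    qed simp
  qed
qed


lemma arith_bound:
  fixes a1 a2 s c n k p :: real
  assumes a1: "a1 > 0" and a2: "a2 \<ge> a1/2" and sn: "s \<le> n" and sk: "s \<le> k"
    and v: "a1*n + a2*c \<le> p" and s0: "0 \<le> s" and c0: "0 \<le> c"
  shows "s + c \<le> max (p/a2) (min (p/a1) (p/a2 + (1 - a1/a2)*k))"
proof -
  have a2p: "a2 > 0" using a1 a2 by simp
  have as: "a1*s \<le> a1*n" using sn a1 by (simp add: mult_left_mono)
  show ?thesis
  proof (cases "a1 \<le> a2")
    case True
    have "a1*c \<le> a2*c" using True c0 by (simp add: mult_right_mono)
    then have "a1*(s+c) \<le> p" using as v by (simp add: distrib_left)
    then have h1: "s + c \<le> p/a1" using a1 by (simp add: pos_le_divide_eq mult.commute)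
    have "(a2-a1)*s \<le> (a2-a1)*k" using True sk by (simp add: mult_left_mono)
    then have "a2*(s+c) \<le> p + (a2-a1)*k" using as v by (simp add: algebra_simps)
    then have "s + c \<le> (p + (a2-a1)*k)/a2" using a2p by (simp add: pos_le_divide_eq mult.commute)
    also have "(p + (a2-a1)*k)/a2 = p/a2 + (1 - a1/a2)*k" using a2p by (simp add: field_simps)
    finally have h2: "s + c \<le> p/a2 + (1 - a1/a2)*k" .
    from h1 h2 show ?thesis by simp
  next
    case False
    have "a2*s \<le> a1*s" using False s0 by (simp add: mult_right_mono)
    then have "a2*(s+c) \<le> p" using as v by (simp add: distrib_left)
    then have "s + c \<le> p/a2" using a2p by (simp add: pos_le_divide_eq mult.commute)
    then show ?thesis by simp
  qed
qed

theorem lemma13: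
  fixes a1 a2 :: real and V :: "'a set" and E :: "'a set set" and k :: nat and p :: real
    and enum :: "nat \<Rightarrow> 'a set" and F :: "(nat \<Rightarrow> nat) set"
  assumes "a2 \<ge> a1 / 2" and "a1 / 2 > 0"
    and "simple_graph V E"
    and "bij_betw enum {1..card E} E"
    and "universal_set F (card E)
           (max (p / a2) (min (p / a1) (p / a2 + (1 - a1 / a2) * real k)))"
  shows "fgpp_yes a1 a2 V E k p \<longleftrightarrow>
         (\<exists>f\<in>F. ec_yes a1 a2 V E (red_edges_of enum (card E) f) k p)"
proof -
  have a1p: "a1 > 0" using assms(2) by simp
  have a12: "a1 \<le> 2*a2" using assms(1) by simp
  have fE: "finite E" using assms(3) simple_graph_finE by blast
  have fV: "finite V" using assms(3) by (simp add: simple_graph_def)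
  have bij: "bij_betw enum {1..card E} E" by (rule assms(4))
  have inj: "inj_on enum {1..card E}" using bij by (simp add: bij_betw_def)
  have img: "enum ` {1..card E} = E" using bij by (simp add: bij_betw_def)
  show ?thesis
  proof
    assume "fgpp_yes a1 a2 V E k p"
    then obtain X where X: "X \<subseteq> V" "card X = k" "val a1 a2 E X \<le> p" by (auto simp: fgpp_yes_def)
    have fX: "finite X" using X(1) fV finite_subset by blast
    define A where "A = inner_edges E X"
    have fA: "finite A" using fE by (simp add: A_def inner_edges_def)
    obtain S where S: "S \<subseteq> A" "card S \<le> card X"
      and Sc: "\<And>u v. (red_adj A X)\<^sup>*\<^sup>* u v \<Longrightarrow> (red_adj S X)\<^sup>*\<^sup>* u v"
      using spanning[OF fX, of A] by blast
    define Cu where "Cu = cut_edges E X"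
    have fCu: "finite Cu" using fE by (simp add: Cu_def cut_edges_def)
    have fS: "finite S" using fA S(1) finite_subset by blast
    have SE: "S \<subseteq> E" using S(1) by (auto simp: A_def inner_edges_def)
    have SCu: "e \<notin> Cu" if "e \<in> S" for e
    proof -
      have eE: "e \<in> E" "e \<subseteq> X" using that S(1) by (auto simp: A_def inner_edges_def)
      then obtain u v where e: "e = {u,v}" "u \<noteq> v" using assms(3) by (auto simp: simple_graph_def)
      have "e \<inter> X = e" using eE by auto
      then have "card (e \<inter> X) = 2" using e by simp
      then show ?thesis by (simp add: Cu_def cut_edges_def)
    qed
    define I where "I = {i\<in>{1..card E}. enum i \<in> S \<union> Cu}"
    have IS: "I \<subseteq> {1..card E}" by (auto simp: I_def)
    have "card I = card (enum ` I)" using inj_on_subset[OF inj IS] by (simp add: card_image)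
    also have "\<dots> \<le> card (S \<union> Cu)" by (rule card_mono) (use fS fCu in \<open>auto simp: I_def\<close>)
    also have "\<dots> \<le> card S + card Cu" by (rule card_Un_le)
    finally have cI: "card I \<le> card S + card Cu" .
    have vX: "val a1 a2 E X = a1 * real (card A) + a2 * real (card Cu)"
      by (simp add: val_def A_def Cu_def)
    have "real (card S) + real (card Cu) \<le> max (p / a2) (min (p / a1) (p / a2 + (1 - a1 / a2) * real k))"
    proof (rule arith_bound[OF a1p assms(1)])
      show "real (card S) \<le> real (card A)" using card_mono[OF fA S(1)] by simp
      show "real (card S) \<le> real k" using S(2) X(2) by simp
      show "a1 * real (card A) + a2 * real (card Cu) \<le> p" using X(3) vX by simp
    qed simp_all
    then have cIx: "real (card I) \<le> max (p / a2) (min (p / a1) (p / a2 + (1 - a1 / a2) * real k))"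
      using cI by (smt (verit) of_nat_add of_nat_mono)
    define f' where "f' i = (if enum i \<in> S then 0 else 1::nat)" for i
    have U: "\<forall>I f'. I \<subseteq> {1..card E} \<and> real (card I) \<le> max (p / a2) (min (p / a1) (p / a2 + (1 - a1 / a2) * real k)) \<and> (\<forall>i\<in>I. f' i \<in> {0::nat, 1}) \<longrightarrow>
        (\<exists>f\<in>F. \<forall>i\<in>I. f i = f' i)"
      using assms(5) unfolding universal_set_def by (rule conjunct2)
    have "\<exists>f\<in>F. \<forall>i\<in>I. f i = f' i"
      using U[rule_format, of I f'] IS cIx by (simp add: f'_def)
    then obtain f where f: "f \<in> F" "\<And>i. i \<in> I \<Longrightarrow> f i = f' i" by blast
    define R where "R = red_edges_of enum (card E) f"
    have SR: "S \<subseteq> R"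
    proof
      fix e assume eS: "e \<in> S"
      then have "e \<in> enum ` {1..card E}" using SE img by blast
      then obtain i where i2: "e = enum i" and i1: "i \<in> {1..card E}" by (rule imageE)
      have i: "i \<in> {1..card E}" "enum i = e" using i1 i2 by simp_all
      then have "i \<in> I" using eS by (simp add: I_def)
      then have "f i = 0" using f(2) i(2) eS by (simp add: f'_def)
      then show "e \<in> R" using i unfolding R_def red_edges_of_def by blast
    qed
    have blue: "\<forall>e\<in>cut_edges E X. e \<notin> R"
    proof (intro ballI notI)
      fix e assume eC: "e \<in> cut_edges E X" and eR: "e \<in> R"
      then have "e \<in> E" by (simp add: cut_edges_def)
      then have "e \<in> enum ` {1..card E}" using img by simp
      then obtain i where i2: "e = enum i" and i1: "i \<in> {1..card E}" by (rule imageE)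
      have i: "i \<in> {1..card E}" "enum i = e" using i1 i2 by simp_all
      then have "i \<in> I" using eC by (simp add: I_def Cu_def)
      moreover have "e \<notin> S" using SCu eC Cu_def by blast
      ultimately have fi: "f i = 1" using f(2) i(2) by (simp add: f'_def)
      have "\<exists>j. e = enum j \<and> j \<in> {1..card E} \<and> f j = 0"
        using eR unfolding R_def red_edges_of_def by (simp only: mem_Collect_eq)
      then obtain j where j0: "e = enum j \<and> j \<in> {1..card E} \<and> f j = 0" by (rule exE)
      have j: "j \<in> {1..card E}" "f j = 0" "e = enum j" using j0 by simp_all
      have "enum i = enum j" using i(2) j(3) by simp
      then have "i = j" by (rule inj_onD[OF inj _ i(1) j(1)])
      then show False using fi j by simp
    qed
    have le: "red_adj S X \<le> red_adj R X" using SR by (auto simp: red_adj_def le_fun_def)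
    have conn: "(red_adj R X)\<^sup>*\<^sup>* u v" if "{u,v} \<in> E" "u \<in> X" "v \<in> X" for u v
    proof -
      have "{u,v} \<in> A" using that by (simp add: A_def inner_edges_def)
      then have "red_adj A X u v" using that by (simp add: red_adj_def)
      then have "(red_adj S X)\<^sup>*\<^sup>* u v" using Sc by blast
      then show ?thesis using rtranclp_mono[OF le] by (auto simp: le_fun_def)
    qed
    have "val_star a1 a2 E R X \<le> val a1 a2 E X" by (rule star_le_val[OF assms(3) X(1) conn])
    then have "val_star a1 a2 E R X \<le> p" using X(3) by simp
    then have "ec_yes a1 a2 V E R k p" unfolding ec_yes_def using X(1,2) blue by blast
    then show "\<exists>f\<in>F. ec_yes a1 a2 V E (red_edges_of enum (card E) f) k p"
      using f(1) unfolding R_def by blast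
  next
    assume "\<exists>f\<in>F. ec_yes a1 a2 V E (red_edges_of enum (card E) f) k p"
    then obtain R X where X: "X \<subseteq> V" "card X = k" "val_star a1 a2 E R X \<le> p"
      unfolding ec_yes_def by blast
    have "val a1 a2 E X \<le> val_star a1 a2 E R X" by (rule val_le_star[OF a12 assms(3) X(1)])
    then show "fgpp_yes a1 a2 V E k p" unfolding fgpp_yes_def using X by force
  qed
qed

end
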